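(* Let $\Gamma$ be a MaxSAT instance encoded with blocking variables, with $\mathrm{cost}(\Gamma)=k$, and let $A$ be the set of total assignments $\alpha\models\Gamma$ with $\mathrm{cost}(\alpha)=k$. Suppose every two distinct assignments in $A$ have Hamming distance at least $d$, and for every blocking variable $b$ there are $\alpha,\beta\in A$ with $\alpha(b)=0$, $\beta(b)=1$. Then every derivation in the cost-SPR calculus from $\Gamma$ that derives a unit clause $b$ for some blocking variable $b$ contains a clause introduced by the cost-SPR rule of width (number of literals) at least $d$.
   Context: Literals, clauses, CNFs (multisets of clauses), $\mathrm{Var}(\Gamma)$. A substitution $\sigma$ maps variables to $0$, $1$ or literals, extended by $\sigma(\lnot x)=\lnot\sigma(x)$; $(\sigma\circ\tau)(x)=\sigma(\tau(x))$. A (partial) assignment has $\sigma(x)\in\{0,1,x\}$; its domain is $\sigma^{-1}(\{0,1\})$; total means all variables assigned. $C{\upharpoonright}_\sigma$: apply $\sigma$ to literals and simplify; $\Gamma{\upharpoonright}_\sigma$ is the multiset of $C{\upharpoonright}_\sigma\ne1$, $C\in\Gamma$. $\lnot C$ is the partial assignment falsifying all literals of $C$. $\Gamma\vdash_1 C$ means unit propagation on $\Gamma{\upharpoonright}_{\lnot C}$ derives the empty clause; $\Gamma\vdash_1\Delta$ means this for all $D\in\Delta$. A MaxSAT instance encoded with blocking variables is a CNF $\Gamma=H\cup\{C_1\lor b_1,\dots,C_m\lor b_m\}$ with distinct fresh blocking variables $b_i$; $\mathrm{cost}(\alpha)=\sum_i\alpha(b_i)$; $\mathrm{cost}(\Gamma)=\min\{\mathrm{cost}(\alpha):\alpha\models\Gamma\}$.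 $C$ is cost-SPR w.r.t. $\Gamma$ if there is a partial assignment $\sigma$ with the same domain as $\lnot C$ such that (1) $\Gamma{\upharpoonright}_{\lnot C}\vdash_1(\Gamma\cup\{C\}){\upharpoonright}_\sigma$ and (2) $\mathrm{cost}(\tau\circ\sigma)\le\mathrm{cost}(\tau)$ for all total $\tau\supseteq\lnot C$. A cost-SPR calculus derivation from $\Gamma$: sequence $D_1,\dots,D_t$, each in $\Gamma$, or by weakening/resolution from earlier clauses, or cost-SPR w.r.t. $\Gamma\cup\{D_1,\dots,D_{i-1}\}$ with $\mathrm{Var}(D_i)\subseteq\mathrm{Var}(\Gamma)$. *)

theory Defs
  imports Main
begin

datatype 'v lit = Pos 'v | Neg 'v

fun var :: "'v lit \<Rightarrow> 'v" where
  "var (Pos x) = x" | "var (Neg x) = x"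

type_synonym 'v clause = "'v lit set"
type_synonym 'v cnf = "'v clause set"

definition vars_clause :: "'v clause \<Rightarrow> 'v set" where
  "vars_clause C = var ` C"

definition vars_cnf :: "'v cnf \<Rightarrow> 'v set" where
  "vars_cnf F = (\<Union>C\<in>F. vars_clause C)"

text \<open>Total assignments: 'v => bool.  Partial assignments: 'v => bool option
  (None means the variable is mapped to itself).\<close>

fun lit_true :: "('v \<Rightarrow> bool) \<Rightarrow> 'v lit \<Rightarrow> bool" where
  "lit_true \<alpha> (Pos x) = \<alpha> x" | "lit_true \<alpha> (Neg x) = (\<not> \<alpha> x)"

definition models :: "('v \<Rightarrow> bool) \<Rightarrow> 'v cnf \<Rightarrow> bool" where
  "models \<alpha> F = (\<forall>C\<in>F. \<exists>l\<in>C. lit_true \<alpha> l)"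

fun lit_val :: "('v \<Rightarrow> bool option) \<Rightarrow> 'v lit \<Rightarrow> bool option" where
  "lit_val \<sigma> (Pos x) = \<sigma> x" | "lit_val \<sigma> (Neg x) = map_option Not (\<sigma> x)"

text \<open>C restricted by sigma: None encodes the constant 1 (clause satisfied).\<close>
definition restrict_clause :: "('v \<Rightarrow> bool option) \<Rightarrow> 'v clause \<Rightarrow> 'v clause option" where
  "restrict_clause \<sigma> C =
     (if \<exists>l\<in>C. lit_val \<sigma> l = Some True then None
      else Some {l\<in>C. lit_val \<sigma> l = None})"

definition restrict_cnf :: "('v \<Rightarrow> bool option) \<Rightarrow> 'v cnf \<Rightarrow> 'v cnf" where
  "restrict_cnf \<sigma> F = {D. \<exists>C\<in>F. restrict_clause \<sigma> C = Some D}"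

definition neg_clause :: "'v clause \<Rightarrow> 'v \<Rightarrow> bool option" where
  "neg_clause C x = (if Pos x \<in> C then Some False else if Neg x \<in> C then Some True else None)"

definition unit_asg :: "'v lit \<Rightarrow> 'v \<Rightarrow> bool option" where
  "unit_asg l = neg_clause {case l of Pos x \<Rightarrow> Neg x | Neg x \<Rightarrow> Pos x}"

definition compose :: "('v \<Rightarrow> bool) \<Rightarrow> ('v \<Rightarrow> bool option) \<Rightarrow> 'v \<Rightarrow> bool" where
  "compose \<tau> \<sigma> x = (case \<sigma> x of Some b \<Rightarrow> b | None \<Rightarrow> \<tau> x)"

definition extends :: "('v \<Rightarrow> bool) \<Rightarrow> ('v \<Rightarrow> bool option) \<Rightarrow> bool" where
  "extends \<tau> \<rho> = (\<forall>x b. \<rho> x = Some b \<longrightarrow> \<tau> x = b)"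

inductive up_refutes :: "'v cnf \<Rightarrow> bool" where
  empty: "{} \<in> F \<Longrightarrow> up_refutes F"
| unit: "{l} \<in> F \<Longrightarrow> up_refutes (restrict_cnf (unit_asg l) F) \<Longrightarrow> up_refutes F"

definition up_implies :: "'v cnf \<Rightarrow> 'v clause \<Rightarrow> bool" where
  "up_implies F C = up_refutes (restrict_cnf (neg_clause C) F)"

definition maxsat_enc :: "'v cnf \<Rightarrow> 'v clause list \<Rightarrow> 'v list \<Rightarrow> 'v cnf \<Rightarrow> bool" where
  "maxsat_enc H Cs bs \<Gamma> =
     (length Cs = length bs \<and> distinct bs \<and> finite H \<and> (\<forall>C\<in>H. finite C)
      \<and> (\<forall>C\<in>set Cs. finite C)
      \<and> (\<forall>b\<in>set bs. b \<notin> vars_cnf H \<and> (\<forall>C\<in>set Cs. b \<notin> vars_clause C))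
      \<and> \<Gamma> = H \<union> {insert (Pos (bs ! i)) (Cs ! i) | i. i < length bs})"

definition cost :: "'v list \<Rightarrow> ('v \<Rightarrow> bool) \<Rightarrow> nat" where
  "cost bs \<alpha> = (\<Sum>i<length bs. if \<alpha> (bs ! i) then 1 else 0)"

definition cnf_cost :: "'v list \<Rightarrow> 'v cnf \<Rightarrow> nat" where
  "cnf_cost bs \<Gamma> = Min {cost bs \<alpha> | \<alpha>. models \<alpha> \<Gamma>}"

definition hamming :: "'v set \<Rightarrow> ('v \<Rightarrow> bool) \<Rightarrow> ('v \<Rightarrow> bool) \<Rightarrow> nat" where
  "hamming V \<alpha> \<beta> = card {x\<in>V. \<alpha> x \<noteq> \<beta> x}"

definition cost_spr :: "'v list \<Rightarrow> 'v cnf \<Rightarrow> 'v clause \<Rightarrow> bool" where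
  "cost_spr bs F C =
     (\<exists>\<sigma>. dom \<sigma> = dom (neg_clause C)
        \<and> (\<forall>D\<in>restrict_cnf \<sigma> (insert C F). up_implies (restrict_cnf (neg_clause C) F) D)
        \<and> (\<forall>\<tau>. extends \<tau> (neg_clause C) \<longrightarrow> cost bs (compose \<tau> \<sigma>) \<le> cost bs \<tau>))"

datatype rule_tag = Axiom | Weakening | Resolution | CostSPR

fun valid_step :: "'v list \<Rightarrow> 'v cnf \<Rightarrow> 'v clause list \<Rightarrow> 'v clause \<times> rule_tag \<Rightarrow> bool" where
  "valid_step bs \<Gamma> prev (D, Axiom) = (D \<in> \<Gamma>)"
| "valid_step bs \<Gamma> prev (D, Weakening) = (finite D \<and> (\<exists>C\<in>set prev. C \<subseteq> D))"
| "valid_step bs \<Gamma> prev (D, Resolution) =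
     (\<exists>C1\<in>set prev. \<exists>C2\<in>set prev. \<exists>x. Pos x \<in> C1 \<and> Neg x \<in> C2
        \<and> D = (C1 - {Pos x}) \<union> (C2 - {Neg x}))"
| "valid_step bs \<Gamma> prev (D, CostSPR) =
     (finite D \<and> cost_spr bs (\<Gamma> \<union> set prev) D \<and> vars_clause D \<subseteq> vars_cnf \<Gamma>)"

definition derivation :: "'v list \<Rightarrow> 'v cnf \<Rightarrow> ('v clause \<times> rule_tag) list \<Rightarrow> bool" where
  "derivation bs \<Gamma> Ds = (\<forall>i<length Ds. valid_step bs \<Gamma> (map fst (take i Ds)) (Ds ! i))"

end

theory Submission
  imports Defs
begin

lemma ext_neg: "(\<forall>l\<in>D. \<not> lit_true \<alpha> l) \<Longrightarrow> extends \<alpha> (neg_clause D)"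
  unfolding extends_def neg_clause_def
  by (auto split: if_splits; metis lit_true.simps)

lemma lit_val_ext: "extends \<alpha> \<rho> \<Longrightarrow> lit_val \<rho> l = Some v \<Longrightarrow> lit_true \<alpha> l = v"
  unfolding extends_def by (cases l) auto

lemma models_restrict:
  assumes "extends \<alpha> \<rho>" "models \<alpha> F"
  shows "models \<alpha> (restrict_cnf \<rho> F)"
  unfolding models_def restrict_cnf_def
proof (intro ballI, clarify)
  fix D C assume C: "C \<in> F" and r: "restrict_clause \<rho> C = Some D"
  then obtain l where l: "l \<in> C" "lit_true \<alpha> l" using assms(2) unfolding models_def by blast
  have nt: "\<forall>l\<in>C. lit_val \<rho> l \<noteq> Some True" and D: "D = {l\<in>C. lit_val \<rho> l = None}"
    using r unfolding restrict_clause_def by (auto split: if_splits)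
  have "lit_val \<rho> l = None"
  proof (cases "lit_val \<rho> l")
    case (Some v)
    then have "v = True" using lit_val_ext[OF assms(1) Some] l by simp
    then show ?thesis using nt l Some by simp
  qed simp
  then show "\<exists>l\<in>D. lit_true \<alpha> l" using l D by blast
qed

lemma up_sound: "up_refutes F \<Longrightarrow> \<not> models \<alpha> F"
proof (induction rule: up_refutes.induct)
  case (empty F) then show ?case unfolding models_def by blast
next
  case (unit l F)
  show ?case
  proof
    assume m: "models \<alpha> F"
    then have "lit_true \<alpha> l" using unit.hyps(1) unfolding models_def by blast
    then have "extends \<alpha> (unit_asg l)" unfolding unit_asg_def
      by (intro ext_neg) (cases l; auto)
    then show False using models_restrict m unit.IH by blast
  qed
qed

lemma up_implies_sound:
  assumes "up_implies G D" "models \<alpha> G"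
  shows "\<exists>l\<in>D. lit_true \<alpha> l"
proof (rule ccontr)
  assume "\<not> ?thesis"
  then have "extends \<alpha> (neg_clause D)" by (intro ext_neg) auto
  then have "models \<alpha> (restrict_cnf (neg_clause D) G)" using models_restrict assms(2) by blast
  then show False using up_sound assms(1) unfolding up_implies_def by blast
qed

lemma cost_le: "cost bs \<alpha> \<le> length bs"
proof -
  have "cost bs \<alpha> \<le> (\<Sum>i<length bs. (1::nat))" unfolding cost_def by (intro sum_mono) auto
  then show ?thesis by simp
qed

lemma cost_min: assumes "models \<beta> \<Gamma>" shows "cnf_cost bs \<Gamma> \<le> cost bs \<beta>"
proof -
  have "{cost bs \<alpha> | \<alpha>. models \<alpha> \<Gamma>} \<subseteq> {..length bs}" using cost_le by blast
  then have "finite {cost bs \<alpha> | \<alpha>. models \<alpha> \<Gamma>}" using finite_subset by blast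
  moreover have "cost bs \<beta> \<in> {cost bs \<alpha> | \<alpha>. models \<alpha> \<Gamma>}" using assms by blast
  ultimately show ?thesis unfolding cnf_cost_def by (rule Min_le)
qed

lemma lt_compose: "lit_val \<sigma> l = Some True \<Longrightarrow> lit_true (compose \<alpha> \<sigma>) l"
  by (cases l) (auto simp: compose_def)
lemma lt_compose2: "lit_val \<sigma> l = None \<Longrightarrow> lit_true (compose \<alpha> \<sigma>) l = lit_true \<alpha> l"
  by (cases l) (auto simp: compose_def)
lemma compose_models:
  assumes "\<forall>D\<in>restrict_cnf \<sigma> F. \<exists>l\<in>D. lit_true \<alpha> l"
  shows "models (compose \<alpha> \<sigma>) F"
  unfolding models_def
proof
  fix E assume E: "E \<in> F"
  show "\<exists>l\<in>E. lit_true (compose \<alpha> \<sigma>) l"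
  proof (cases "\<exists>l\<in>E. lit_val \<sigma> l = Some True")
    case True
    then obtain l where "l \<in> E" "lit_val \<sigma> l = Some True" by blast
    then show ?thesis using lt_compose by blast
  next
    case False
    then have "restrict_clause \<sigma> E = Some {l\<in>E. lit_val \<sigma> l = None}"
      unfolding restrict_clause_def by simp
    then have "{l\<in>E. lit_val \<sigma> l = None} \<in> restrict_cnf \<sigma> F"
      using E unfolding restrict_cnf_def by blast
    with assms have "\<exists>l\<in>{l\<in>E. lit_val \<sigma> l = None}. lit_true \<alpha> l" by (rule bspec)
    then obtain l where "l \<in> E" "lit_val \<sigma> l = None" "lit_true \<alpha> l" by auto
    then show ?thesis using lt_compose2 by blast
  qed
qed

lemma key:
  assumes A_def: "A = {\<alpha>. models \<alpha> \<Gamma> \<and> cost bs \<alpha> = cnf_cost bs \<Gamma>}"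
    and dist: "\<forall>\<alpha>\<in>A. \<forall>\<beta>\<in>A. (\<exists>x\<in>vars_cnf \<Gamma>. \<alpha> x \<noteq> \<beta> x) \<longrightarrow> d \<le> hamming (vars_cnf \<Gamma>) \<alpha> \<beta>"
    and sub: "\<Gamma> \<subseteq> F" and allF: "\<forall>\<alpha>\<in>A. models \<alpha> F"
    and spr: "cost_spr bs F C" and fin: "finite C" and cd: "card C < d"
    and vC: "vars_clause C \<subseteq> vars_cnf \<Gamma>"
    and aA: "\<alpha> \<in> A"
  shows "\<exists>l\<in>C. lit_true \<alpha> l"
proof (rule ccontr)
  assume nC: "\<not> ?thesis"
  then have ext: "extends \<alpha> (neg_clause C)" by (intro ext_neg) auto
  obtain \<sigma> where dom: "dom \<sigma> = dom (neg_clause C)"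
    and up: "\<forall>D\<in>restrict_cnf \<sigma> (insert C F). up_implies (restrict_cnf (neg_clause C) F) D"
    and cst: "\<forall>\<tau>. extends \<tau> (neg_clause C) \<longrightarrow> cost bs (compose \<tau> \<sigma>) \<le> cost bs \<tau>"
    using spr unfolding cost_spr_def by blast
  have mF: "models \<alpha> F" using allF aA by blast
  have mG: "models \<alpha> (restrict_cnf (neg_clause C) F)" using models_restrict[OF ext mF] .
  have "\<forall>D\<in>restrict_cnf \<sigma> (insert C F). \<exists>l\<in>D. lit_true \<alpha> l"
    using up up_implies_sound[OF _ mG] by blast
  then have mc: "models (compose \<alpha> \<sigma>) (insert C F)" by (rule compose_models)
  then have mGam: "models (compose \<alpha> \<sigma>) \<Gamma>" using sub unfolding models_def by blast
  have "cost bs (compose \<alpha> \<sigma>) \<le> cost bs \<alpha>" using cst ext by blast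
  moreover have "cost bs \<alpha> = cnf_cost bs \<Gamma>" using aA A_def by blast
  moreover have "cnf_cost bs \<Gamma> \<le> cost bs (compose \<alpha> \<sigma>)" using cost_min[OF mGam] .
  ultimately have cA: "compose \<alpha> \<sigma> \<in> A" using A_def mGam by auto
  have domC: "dom (neg_clause C) \<subseteq> vars_clause C"
    unfolding neg_clause_def vars_clause_def dom_def
    by (auto split: if_splits intro: image_eqI[of _ var "Pos _"] image_eqI[of _ var "Neg _"])
  have diff: "{x\<in>vars_cnf \<Gamma>. \<alpha> x \<noteq> compose \<alpha> \<sigma> x} \<subseteq> vars_clause C"
    using dom domC unfolding compose_def by (auto split: option.splits)
  have "card (vars_clause C) \<le> card C" unfolding vars_clause_def using fin by (rule card_image_le)
  then have "hamming (vars_cnf \<Gamma>) \<alpha> (compose \<alpha> \<sigma>) < d"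
    unfolding hamming_def using card_mono[OF _ diff] fin cd
    by (metis (no_types, lifting) finite_imageI le_less_trans order.strict_trans1 vars_clause_def)
  then have agree: "\<forall>x\<in>vars_cnf \<Gamma>. \<alpha> x = compose \<alpha> \<sigma> x" using dist aA cA by fastforce
  obtain l where l: "l \<in> C" "lit_true (compose \<alpha> \<sigma>) l" using mc unfolding models_def by blast
  have "var l \<in> vars_cnf \<Gamma>" using vC l(1) unfolding vars_clause_def by blast
  then have "lit_true \<alpha> l" using agree l(2) by (cases l) auto
  then show False using nC l(1) by blast
qed

theorem corollary5p4:
  fixes H :: "'v cnf" and Cs :: "'v clause list" and bs :: "'v list" and \<Gamma> :: "'v cnf"
    and k d :: nat and A :: "('v \<Rightarrow> bool) set"
    and Ds :: "('v clause \<times> rule_tag) list" and b :: 'v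
  assumes enc: "maxsat_enc H Cs bs \<Gamma>"
    and cost_k: "cnf_cost bs \<Gamma> = k"
    and A_def: "A = {\<alpha>. models \<alpha> \<Gamma> \<and> cost bs \<alpha> = k}"
    and dist: "\<forall>\<alpha>\<in>A. \<forall>\<beta>\<in>A. (\<exists>x\<in>vars_cnf \<Gamma>. \<alpha> x \<noteq> \<beta> x) \<longrightarrow> d \<le> hamming (vars_cnf \<Gamma>) \<alpha> \<beta>"
    and both: "\<forall>b'\<in>set bs. \<exists>\<alpha>\<in>A. \<exists>\<beta>\<in>A. \<not> \<alpha> b' \<and> \<beta> b'"
    and der: "derivation bs \<Gamma> Ds"
    and b: "b \<in> set bs"
    and unit: "{Pos b} \<in> fst ` set Ds"
  shows "\<exists>(D, t)\<in>set Ds. t = CostSPR \<and> d \<le> card D"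
proof (rule ccontr)
  assume "\<not> ?thesis"
  then have small: "\<forall>(D, t)\<in>set Ds. t = CostSPR \<longrightarrow> card D < d"
    by (simp add: case_prod_beta not_le)
  have A2: "A = {\<alpha>. models \<alpha> \<Gamma> \<and> cost bs \<alpha> = cnf_cost bs \<Gamma>}" using A_def cost_k by simp
  have inv: "\<forall>\<alpha>\<in>A. \<exists>l\<in>fst (Ds ! i). lit_true \<alpha> l" if "i < length Ds" for i
    using that
  proof (induction i rule: less_induct)
    case (less i)
    let ?prev = "map fst (take i Ds)"
    have IHp: "\<forall>\<alpha>\<in>A. models \<alpha> (set ?prev)"
    proof
      fix \<alpha> assume a: "\<alpha> \<in> A"
      show "models \<alpha> (set ?prev)" unfolding models_def
      proof
        fix C assume "C \<in> set ?prev"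
        then obtain j where j: "j < length (take i Ds)" "C = fst (take i Ds ! j)"
          by (auto simp: in_set_conv_nth)
        then have "j < i" "C = fst (Ds ! j)" by auto
        moreover have "j < length Ds" using \<open>j < i\<close> less.prems by simp
        ultimately show "\<exists>l\<in>C. lit_true \<alpha> l" using less.IH a by blast
      qed
    qed
    have AG: "\<forall>\<alpha>\<in>A. models \<alpha> \<Gamma>" using A_def by blast
    have AF: "\<forall>\<alpha>\<in>A. models \<alpha> (\<Gamma> \<union> set ?prev)" using IHp AG unfolding models_def by blast
    have vs: "valid_step bs \<Gamma> ?prev (Ds ! i)" using der less.prems unfolding derivation_def by blast
    obtain D t where Dt: "Ds ! i = (D, t)" by fastforce
    have inDs: "(D, t) \<in> set Ds" using Dt less.prems by (metis nth_mem)
    show ?case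
    proof (cases t)
      case Axiom
      then have "D \<in> \<Gamma>" using vs Dt by simp
      then show ?thesis using AG Dt unfolding models_def by simp
    next
      case Weakening
      then obtain C where "C \<in> set ?prev" "C \<subseteq> D" using vs Dt by auto
      then show ?thesis using IHp Dt unfolding models_def by (metis fst_conv subsetD)
    next
      case Resolution
      then obtain C1 C2 x where c: "C1 \<in> set ?prev" "C2 \<in> set ?prev" "Pos x \<in> C1" "Neg x \<in> C2"
        "D = (C1 - {Pos x}) \<union> (C2 - {Neg x})" using vs Dt by auto
      show ?thesis
      proof
        fix \<alpha> assume a: "\<alpha> \<in> A"
        obtain l1 where l1: "l1 \<in> C1" "lit_true \<alpha> l1" using IHp a c(1) unfolding models_def by blast
        obtain l2 where l2: "l2 \<in> C2" "lit_true \<alpha> l2" using IHp a c(2) unfolding models_def by blast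
        show "\<exists>l\<in>fst (Ds ! i). lit_true \<alpha> l"
        proof (cases "l1 = Pos x")
          case True
          then have "l2 \<noteq> Neg x" using l1 l2 by auto
          then show ?thesis using l2 c(5) Dt by auto
        next
          case False
          then show ?thesis using l1 c(5) Dt by auto
        qed
      qed
    next
      case CostSPR
      then have v: "finite D" "cost_spr bs (\<Gamma> \<union> set ?prev) D" "vars_clause D \<subseteq> vars_cnf \<Gamma>"
        using vs Dt by auto
      have "card D < d" using small inDs CostSPR by auto
      have "\<Gamma> \<subseteq> \<Gamma> \<union> set ?prev" by blast
      then show ?thesis using key[OF A2 dist _ AF v(2) v(1) \<open>card D < d\<close> v(3)] Dt by simp
    qed
  qed
  obtain i where i: "i < length Ds" "fst (Ds ! i) = {Pos b}" using unit
    by (auto simp: in_set_conv_nth)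
  obtain \<alpha> where a: "\<alpha> \<in> A" "\<not> \<alpha> b" using both b by blast
  show False using inv[OF i(1)] i(2) a by auto
qed

end
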